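(* Let $G=(V(G),E(G),\ell)$ be an $n$-order node-labeled graph, $k\ge 2$, and let $\mathbf{F}\in\mathbb{R}^{n\times d}$ be a node feature matrix consistent with $\ell$. Then for all $t\ge 1$ there exist functions $g^{(0)},\dots,g^{(t)}\colon V(G)^k\to\mathbb{R}$, with $g^{(0)}$ consistent with the initial colors, scalars $\alpha_1,\dots,\alpha_k,\beta_1,\dots,\beta_k$ and feed-forward networks $\mathsf{FFN}$ with $$g^{(s)}(\mathbf{u})=\mathsf{FFN}\Big(g^{(s-1)}(\mathbf{u})+\sum_{j\in[k]}\Big(\alpha_j\sum_{w\in\Delta_j(\mathbf{u})}g^{(s-1)}(\phi_j(\mathbf{u},w))+\beta_j\sum_{w\in V(G)\setminus\Delta_j(\mathbf{u})}g^{(s-1)}(\phi_j(\mathbf{u},w))\Big)\Big)$$ for $1\le s\le t$, such that for all $\mathbf{u},\mathbf{v}\in V(G)^k$, $$C^{k,\mathrm{M}}_t(\mathbf{u})=C^{k,\mathrm{M}}_t(\mathbf{v})\iff g^{(t)}(\mathbf{u})=g^{(t)}(\mathbf{v}).$$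
   Context: $\phi_j(\mathbf{u},w)$ replaces the $j$-th entry of $\mathbf{u}=(u_1,\dots,u_k)$ by $w$; $\Delta_j(\mathbf{u})=N(u_j)$ is the set of nodes adjacent to $u_j$. $C^{k,\mathrm{M}}_t$ is the coloring of the $\delta$-$k$-WL: initial colors are determined by the atomic type of the tuple and the node labels, and $C^{k,\mathrm{M}}_t(\mathbf{v})=\mathsf{RELABEL}\big(C^{k,\mathrm{M}}_{t-1}(\mathbf{v}),(\{\!\{(C^{k,\mathrm{M}}_{t-1}(\phi_j(\mathbf{v},w)),\mathrm{adj}(v_j,w))\mid w\in V(G)\}\!\})_{j=1}^k\big)$, with $\mathrm{adj}(v,w)=1$ if $(v,w)\in E(G)$ and $0$ otherwise, and $\mathsf{RELABEL}$ injective into fresh natural numbers. "$g^{(0)}$ consistent with the initial colors" means $g^{(0)}(\mathbf{u})=g^{(0)}(\mathbf{v})$ iff $\mathbf{u},\mathbf{v}$ have the same initial color. *)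

theory Defs
  imports Complex_Main "HOL-Library.Multiset"
begin

(* k-tuples over V, represented as lists of length k (index j ranges over 0..<k) *)
definition tuples :: "'a set \<Rightarrow> nat \<Rightarrow> 'a list set" where
  "tuples V k = {u. length u = k \<and> set u \<subseteq> V}"

definition atp :: "('a \<times> 'a) set \<Rightarrow> 'a list \<Rightarrow> (bool \<times> bool) list" where
  "atp E u = [(u ! i = u ! j, (u ! i, u ! j) \<in> E). i \<leftarrow> [0..<length u], j \<leftarrow> [0..<length u]]"

definition adj :: "('a \<times> 'a) set \<Rightarrow> 'a \<Rightarrow> 'a \<Rightarrow> nat" where
  "adj E v w = (if (v, w) \<in> E then 1 else 0)"

(* delta-k-WL coloring; c0 = initial coloring, R = RELABEL *)
fun dkwl :: "'a set \<Rightarrow> ('a \<times> 'a) set \<Rightarrow> ('a list \<Rightarrow> nat)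
     \<Rightarrow> (nat \<Rightarrow> (nat \<times> nat) multiset list \<Rightarrow> nat) \<Rightarrow> nat \<Rightarrow> 'a list \<Rightarrow> nat" where
  "dkwl V E c0 R 0 u = c0 u"
| "dkwl V E c0 R (Suc t) u =
     R (dkwl V E c0 R t u)
       (map (\<lambda>j. image_mset (\<lambda>w. (dkwl V E c0 R t (u[j := w]), adj E (u ! j) w)) (mset_set V))
            [0..<length u])"

(* Feed-forward network R -> R: layers (W, b) with W a list of rows;
   ReLU after every layer except the last one. *)
definition relu :: "real \<Rightarrow> real" where
  "relu x = max 0 x"

definition affine :: "real list list \<Rightarrow> real list \<Rightarrow> real list \<Rightarrow> real list" where
  "affine W b x = map2 (\<lambda>row c. (\<Sum>i<length x. row ! i * x ! i) + c) W b"

fun ffn_eval :: "(real list list \<times> real list) list \<Rightarrow> real list \<Rightarrow> real list" where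
  "ffn_eval [] x = x"
| "ffn_eval [(W, b)] x = affine W b x"
| "ffn_eval ((W, b) # L) x = ffn_eval L (map relu (affine W b x))"

fun ffn_wf :: "nat \<Rightarrow> (real list list \<times> real list) list \<Rightarrow> bool" where
  "ffn_wf din [] = (din = 1)"
| "ffn_wf din ((W, b) # L) =
     ((\<forall>row \<in> set W. length row = din) \<and> length b = length W \<and> ffn_wf (length W) L)"

definition is_ffn :: "(real \<Rightarrow> real) \<Rightarrow> bool" where
  "is_ffn f \<longleftrightarrow> (\<exists>L. L \<noteq> [] \<and> ffn_wf 1 L \<and> (\<forall>x. f x = hd (ffn_eval L [x])))"

end

theory Submission imports Defs begin

definition pl :: "real \<Rightarrow> (real \<times> real) list \<Rightarrow> real \<Rightarrow> real" where
  "pl c ps x = c + sum_list (map (\<lambda>p. fst p * relu (x - snd p)) ps)"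

lemma pl_ffn: "is_ffn (pl c ps)"
proof -
  let ?L = "[(map (\<lambda>_. [1]) ps, map (\<lambda>p. - snd p) ps), ([map fst ps], [c])]"
  have "ffn_wf 1 ?L" by simp
  moreover have "pl c ps x = hd (ffn_eval ?L [x])" for x
  proof -
    have h: "map relu (affine (map (\<lambda>_. [1]) ps) (map (\<lambda>p. - snd p) ps) [x])
          = map (\<lambda>p. relu (x - snd p)) ps"
      by (induction ps) (auto simp: affine_def)
    have "hd (ffn_eval ?L [x]) = (\<Sum>i<length ps. map fst ps ! i * map (\<lambda>p. relu (x - snd p)) ps ! i) + c"
      by (simp add: h affine_def)
    also have "(\<Sum>i<length ps. map fst ps ! i * map (\<lambda>p. relu (x - snd p)) ps ! i)
        = sum_list (map (\<lambda>p. fst p * relu (x - snd p)) ps)"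
      apply (subst sum_list_sum_nth)
      apply (simp add: atLeast0LessThan)
      done
    finally show ?thesis by (simp add: pl_def)
  qed
  ultimately show ?thesis unfolding is_ffn_def by (intro exI[of _ ?L]) auto
qed

lemma interp: "finite S \<Longrightarrow> \<exists>c ps. \<forall>x\<in>S. pl c ps x = y x"
proof (induction S rule: finite_linorder_max_induct)
  case empty
  then show ?case by auto
next
  case (insert b A)
  show ?case
  proof (cases "A = {}")
    case True
    then show ?thesis by (auto simp: pl_def intro!: exI[of _ "y b"] exI[of _ "[]"])
  next
    case False
    from insert obtain c ps where cp: "\<forall>x\<in>A. pl c ps x = y x" by auto
    define M where "M = Max A"
    have MA: "M \<in> A" using False insert by (simp add: M_def)
    have Mb: "M < b" using MA insert by auto
    have xM: "x \<le> M" if "x \<in> A" for x using that insert by (simp add: M_def)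
    define a where "a = (y b - pl c ps b) / (b - M)"
    have pl_app: "pl c (ps @ [(a, M)]) x = pl c ps x + a * relu (x - M)" for x
      by (simp add: pl_def)
    show ?thesis
    proof (intro exI[of _ c] exI[of _ "ps @ [(a, M)]"] ballI)
      fix x assume "x \<in> insert b A"
      then show "pl c (ps @ [(a, M)]) x = y x"
      proof
        assume "x = b"
        have "relu (b - M) = b - M" using Mb by (simp add: relu_def)
        moreover have "a * (b - M) = y b - pl c ps b" using Mb by (simp add: a_def)
        ultimately show ?thesis using \<open>x = b\<close> by (simp add: pl_app)
      next
        assume "x \<in> A"
        then show ?thesis using xM[of x] cp by (simp add: pl_app relu_def)
      qed
    qed
  qed
qed

lemma interp2:
  assumes "finite T" "\<forall>u\<in>T. \<forall>v\<in>T. a u = a v \<longrightarrow> b u = b v"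
  shows "\<exists>f. is_ffn f \<and> (\<forall>u\<in>T. f (a u) = (b u :: real))"
proof -
  define y where "y x = b (SOME u. u \<in> T \<and> a u = x)" for x
  obtain c ps where cp: "\<forall>x\<in>a ` T. pl c ps x = y x"
    using interp[of "a ` T" y] assms by auto
  have "pl c ps (a u) = b u" if "u \<in> T" for u
  proof -
    have "\<exists>v. v \<in> T \<and> a v = a u" using that by auto
    then have "(SOME v. v \<in> T \<and> a v = a u) \<in> T \<and> a (SOME v. v \<in> T \<and> a v = a u) = a u"
      by (rule someI_ex)
    then have "b (SOME v. v \<in> T \<and> a v = a u) = b u" using that assms(2) by blast
    then have "y (a u) = b u" by (simp add: y_def)
    moreover have "pl c ps (a u) = y (a u)" using cp that by blast
    ultimately show ?thesis by simp
  qed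
  then show ?thesis using pl_ffn[of c ps] by (intro exI[of _ "pl c ps"]) simp
qed

lemma digits_bound: "(\<forall>i<m. d i < (Q::nat)) \<Longrightarrow> (\<Sum>i<m. d i * Q^i) < Q^m"
proof (induction m)
  case 0 then show ?case by simp
next
  case (Suc m)
  then have "(\<Sum>i<m. d i * Q^i) < Q^m" "d m \<le> Q - 1" by auto
  then have "(\<Sum>i<Suc m. d i * Q^i) < Q^m + (Q - 1) * Q^m"
    by (simp add: add_less_le_mono mult_right_mono)
  also have "\<dots> = Q^Suc m" using Suc.prems by (cases Q) auto
  finally show ?case .
qed

lemma digits_inj: "(\<forall>i<m. d i < (Q::nat)) \<Longrightarrow> (\<forall>i<m. e i < Q) \<Longrightarrow>
   (\<Sum>i<m. d i * Q^i) = (\<Sum>i<m. e i * Q^i) \<Longrightarrow> \<forall>i<m. d i = e i"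
proof (induction m)
  case 0 then show ?case by simp
next
  case (Suc m)
  have ld: "(\<Sum>i<m. d i * Q^i) < Q^m" and le: "(\<Sum>i<m. e i * Q^i) < Q^m"
    using Suc.prems by (auto intro!: digits_bound)
  have Qp: "0 < Q^m" using Suc.prems by auto
  have eq: "(\<Sum>i<m. d i * Q^i) + d m * Q^m = (\<Sum>i<m. e i * Q^i) + e m * Q^m"
    using Suc.prems(3) by simp
  have "((\<Sum>i<m. d i * Q^i) + d m * Q^m) div Q^m = d m" using ld Qp by simp
  moreover have "((\<Sum>i<m. e i * Q^i) + e m * Q^m) div Q^m = e m" using le Qp by simp
  ultimately have dm: "d m = e m" using eq by simp
  then have "(\<Sum>i<m. d i * Q^i) = (\<Sum>i<m. e i * Q^i)" using eq by simp
  with Suc have "\<forall>i<m. d i = e i" by auto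
  with dm show ?case using less_Suc_eq by auto
qed

lemma sum_pow_mset: "set_mset M \<subseteq> {..<K} \<Longrightarrow> (\<Sum>x\<in>#M. (N::nat)^x) = (\<Sum>c<K. count M c * N^c)"
proof (induction M)
  case empty then show ?case by simp
next
  case (add x M)
  then have xK: "x < K" by auto
  have "(\<Sum>c<K. count (add_mset x M) c * N^c) = (\<Sum>c<K. count M c * N^c + (if c = x then N^c else 0))"
    by (intro sum.cong) auto
  also have "\<dots> = (\<Sum>c<K. count M c * N^c) + N^x" using xK by (simp add: sum.distrib)
  finally show ?case using add by simp
qed

lemma pow_sum_digits:
  assumes "finite S" "\<forall>w\<in>S. f w < K" "card S < N"
  shows "(\<Sum>w\<in>S. N^(f w)) = (\<Sum>c<K. count (image_mset f (mset_set S)) c * N^c)"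
    and "\<forall>c<K. count (image_mset f (mset_set S)) c < N"
proof -
  have "(\<Sum>w\<in>S. N^(f w)) = (\<Sum>x\<in>#image_mset f (mset_set S). N^x)"
    by (simp add: sum_unfold_sum_mset multiset.map_comp o_def)
  also have "\<dots> = (\<Sum>c<K. count (image_mset f (mset_set S)) c * N^c)"
    using assms by (intro sum_pow_mset) auto
  finally show "(\<Sum>w\<in>S. N^(f w)) = (\<Sum>c<K. count (image_mset f (mset_set S)) c * N^c)" .
  show "\<forall>c<K. count (image_mset f (mset_set S)) c < N"
    using count_le_size[of "image_mset f (mset_set S)"] assms by (auto intro: le_less_trans)
qed

lemma pow_sum_bound:
  assumes "finite S" "\<forall>w\<in>S. f w < K" "card S < N"
  shows "(\<Sum>w\<in>S. N^(f w)) < N^K"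
  using pow_sum_digits[OF assms] digits_bound by metis

lemma pow_sum_inj:
  assumes "finite S" "\<forall>w\<in>S. f w < K" "card S < N"
    "finite S'" "\<forall>w\<in>S'. f' w < K" "card S' < N"
    "(\<Sum>w\<in>S. N^(f w)) = (\<Sum>w\<in>S'. N^(f' w))"
  shows "image_mset f (mset_set S) = image_mset f' (mset_set S')"
proof (rule multiset_eqI)
  fix c
  have d: "\<forall>c<K. count (image_mset f (mset_set S)) c = count (image_mset f' (mset_set S')) c"
    using digits_inj[OF pow_sum_digits(2)[OF assms(1-3)] pow_sum_digits(2)[OF assms(4-6)]]
      pow_sum_digits(1)[OF assms(1-3)] pow_sum_digits(1)[OF assms(4-6)] assms(7) by metis
  show "count (image_mset f (mset_set S)) c = count (image_mset f' (mset_set S')) c"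
  proof (cases "c < K")
    case True then show ?thesis using d by auto
  next
    case False
    then have "c \<notin># image_mset f (mset_set S)" "c \<notin># image_mset f' (mset_set S')"
      using assms by auto
    then show ?thesis by (metis count_eq_zero_iff)
  qed
qed


definition dig :: "nat \<Rightarrow> (nat \<Rightarrow> nat) \<Rightarrow> (nat \<Rightarrow> nat) \<Rightarrow> nat \<Rightarrow> nat" where
  "dig x a b i = (if i = 0 then x else if odd i then a (i div 2) else b (i div 2 - 1))"

lemma enc_digits: "x + (\<Sum>j<k. Q^(2*j+1) * a j + Q^(2*j+2) * b j) = (\<Sum>i<2*k+1. dig x a b i * (Q::nat)^i)"
proof (induction k)
  case 0 then show ?case by (simp add: dig_def)
next
  case (Suc k)
  have e: "2 * Suc k + 1 = Suc (Suc (2*k+1))" by simp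
  have "dig x a b (2*k+1) = a k" "dig x a b (Suc (2*k+1)) = b k" by (auto simp: dig_def)
  then show ?case using Suc by (simp only: e sum.lessThan_Suc) (simp add: algebra_simps)
qed

lemma enc_inj:
  assumes "x < Q" "x' < Q" "\<forall>j<k. a j < Q \<and> b j < Q \<and> a' j < Q \<and> b' j < (Q::nat)"
    "x + (\<Sum>j<k. Q^(2*j+1) * a j + Q^(2*j+2) * b j) = x' + (\<Sum>j<k. Q^(2*j+1) * a' j + Q^(2*j+2) * b' j)"
  shows "x = x' \<and> (\<forall>j<k. a j = a' j \<and> b j = b' j)"
proof -
  have ix: "i div 2 - 1 < k" "odd i \<Longrightarrow> i div 2 < k" if "i < 2*k+1" "i \<noteq> 0" for i
    using that by presburger+
  have b1: "\<forall>i<2*k+1. dig x a b i < Q" using assms(1,3) ix by (auto simp: dig_def)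
  have b2: "\<forall>i<2*k+1. dig x' a' b' i < Q" using assms(2,3) ix by (auto simp: dig_def)
  have d: "\<forall>i<2*k+1. dig x a b i = dig x' a' b' i"
    using digits_inj[OF b1 b2] assms(4) enc_digits by metis
  have "x = x'" using d[rule_format, of 0] by (simp add: dig_def)
  moreover have "a j = a' j \<and> b j = b' j" if "j < k" for j
    using d[rule_format, of "2*j+1"] d[rule_format, of "2*j+2"] that by (simp_all add: dig_def)
  ultimately show ?thesis by blast
qed

lemma split_mset:
  assumes "finite V"
  shows "image_mset (\<lambda>w. (f w, adj E x w)) (mset_set V)
    = image_mset (\<lambda>c. (c, 1)) (image_mset f (mset_set {w\<in>V. (x,w)\<in>E}))
    + image_mset (\<lambda>c. (c, 0)) (image_mset f (mset_set (V - {w\<in>V. (x,w)\<in>E})))"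
proof -
  let ?S = "{w\<in>V. (x,w)\<in>E}"
  have "V = ?S \<union> (V - ?S)" by blast
  then have "mset_set V = mset_set ?S + mset_set (V - ?S)"
    using assms by (metis (no_types, lifting) Diff_disjoint finite_Diff finite_subset mem_Collect_eq mset_set_Union subsetI)
  then have "image_mset (\<lambda>w. (f w, adj E x w)) (mset_set V)
     = image_mset (\<lambda>w. (f w, adj E x w)) (mset_set ?S) + image_mset (\<lambda>w. (f w, adj E x w)) (mset_set (V - ?S))"
    by simp
  also have "image_mset (\<lambda>w. (f w, adj E x w)) (mset_set ?S) = image_mset (\<lambda>w. (f w, 1)) (mset_set ?S)"
    using assms by (intro image_mset_cong) (auto simp: adj_def)
  also have "image_mset (\<lambda>w. (f w, adj E x w)) (mset_set (V - ?S)) = image_mset (\<lambda>w. (f w, 0)) (mset_set (V - ?S))"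
    using assms by (intro image_mset_cong) (auto simp: adj_def)
  finally show ?thesis by (simp add: multiset.map_comp o_def)
qed

theorem corollaryI4:
  fixes V :: "'a set" and E :: "('a \<times> 'a) set" and lab :: "'a \<Rightarrow> 'l"
    and F :: "'a \<Rightarrow> real list" and n d k t :: nat
    and c0 :: "'a list \<Rightarrow> nat" and R :: "nat \<Rightarrow> (nat \<times> nat) multiset list \<Rightarrow> nat"
  assumes "finite V" and "card V = n"
    and "E \<subseteq> V \<times> V" and "sym E" and "\<forall>v. (v, v) \<notin> E"
    and "\<forall>v\<in>V. length (F v) = d"
    and "\<forall>v\<in>V. \<forall>w\<in>V. F v = F w \<longleftrightarrow> lab v = lab w"
    and "k \<ge> 2"
    and "\<forall>u\<in>tuples V k. \<forall>v\<in>tuples V k.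
           c0 u = c0 v \<longleftrightarrow> (atp E u = atp E v \<and> map lab u = map lab v)"
    and "\<forall>a b a' b'. R a b = R a' b' \<longrightarrow> a = a' \<and> b = b'"
    and "t \<ge> 1"
  shows "\<exists>(g :: nat \<Rightarrow> 'a list \<Rightarrow> real) (\<alpha> :: nat \<Rightarrow> real) (\<beta> :: nat \<Rightarrow> real)
            (ffn :: nat \<Rightarrow> real \<Rightarrow> real).
     (\<forall>u\<in>tuples V k. \<forall>v\<in>tuples V k. g 0 u = g 0 v \<longleftrightarrow> c0 u = c0 v)
   \<and> (\<forall>s\<in>{1..t}. is_ffn (ffn s))
   \<and> (\<forall>s\<in>{1..t}. \<forall>u\<in>tuples V k.
        g s u = ffn s (g (s - 1) u
          + (\<Sum>j<k. \<alpha> j * (\<Sum>w\<in>{w\<in>V. (u ! j, w) \<in> E}. g (s - 1) (u[j := w]))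
                   + \<beta> j * (\<Sum>w\<in>V - {w\<in>V. (u ! j, w) \<in> E}. g (s - 1) (u[j := w])))))
   \<and> (\<forall>u\<in>tuples V k. \<forall>v\<in>tuples V k.
        dkwl V E c0 R t u = dkwl V E c0 R t v \<longleftrightarrow> g t u = g t v)"
proof -
  let ?T = "tuples V k"
  let ?col = "dkwl V E c0 R"
  have finV: "finite V" by fact
  have finT: "finite ?T" unfolding tuples_def
    using finite_lists_length_eq[OF finV, of k] by (simp add: conj_commute)
  have updT: "u[j := w] \<in> ?T" if "u \<in> ?T" "w \<in> V" for u j w
    using that set_update_subsetI[of u V w j] by (auto simp: tuples_def)
  define K where "K = Suc (Max ((\<lambda>(p,u). ?col p u) ` ({..<t} \<times> ?T)))"
  have colK: "?col p u < K" if "p < t" "u \<in> ?T" for p u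
  proof -
    have "?col p u \<le> Max ((\<lambda>(p,u). ?col p u) ` ({..<t} \<times> ?T))"
      using that finT by (intro Max_ge) (auto intro!: finite_imageI)
    then show ?thesis by (simp add: K_def)
  qed
  define N :: nat where "N = card V + 2"
  have N1: "1 < N" by (simp add: N_def)
  define Q where "Q = N ^ K"
  define Nb where "Nb u j = {w\<in>V. (u ! j, w) \<in> E}" for u :: "'a list" and j
  define A where "A p u j = (\<Sum>w\<in>Nb u j. N ^ ?col p (u[j := w]))" for p u j
  define B where "B p u j = (\<Sum>w\<in>V - Nb u j. N ^ ?col p (u[j := w]))" for p u j
  define agg where "agg p u = N ^ ?col p u + (\<Sum>j<k. Q^(2*j+1) * A p u j + Q^(2*j+2) * B p u j)" for p u
  have finNb: "finite (Nb u j)" "finite (V - Nb u j)" for u j using finV by (auto simp: Nb_def)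
  have cardNb: "card (Nb u j) < N" "card (V - Nb u j) < N" for u j
    using card_mono[OF finV, of "Nb u j"] card_mono[OF finV, of "V - Nb u j"]
    by (auto simp: Nb_def N_def)
  have colKu: "\<forall>w\<in>S. ?col p (u[j := w]) < K" if "p < t" "u \<in> ?T" "S \<subseteq> V" for p u j S
    using that colK updT by blast
  have key: "?col (Suc p) u = ?col (Suc p) v"
    if p: "p < t" and uT: "u \<in> ?T" and vT: "v \<in> ?T" and eq: "agg p u = agg p v" for p u v
  proof -
    have Sb: "Nb u j \<subseteq> V" "V - Nb u j \<subseteq> V" for u j by (auto simp: Nb_def)
    have bx: "N ^ ?col p w < Q" if "w \<in> ?T" for w
      using colK[OF p that] N1 by (simp add: Q_def power_strict_increasing)
    have bA: "A p w j < Q" "B p w j < Q" if "w \<in> ?T" for w j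
      unfolding A_def B_def Q_def
      by (rule pow_sum_bound[OF finNb(1) colKu[OF p that Sb(1)] cardNb(1)],
          rule pow_sum_bound[OF finNb(2) colKu[OF p that Sb(2)] cardNb(2)])
    have r: "N ^ ?col p u = N ^ ?col p v \<and> (\<forall>j<k. A p u j = A p v j \<and> B p u j = B p v j)"
      using enc_inj[of "N ^ ?col p u" Q "N ^ ?col p v" k "A p u" "B p u" "A p v" "B p v"]
        bx[OF uT] bx[OF vT] bA[OF uT] bA[OF vT] eq unfolding agg_def by blast
    then have c: "?col p u = ?col p v" using N1 power_inject_exp by blast
    have m: "image_mset (\<lambda>w. (?col p (u[j := w]), adj E (u ! j) w)) (mset_set V)
           = image_mset (\<lambda>w. (?col p (v[j := w]), adj E (v ! j) w)) (mset_set V)" if "j < k" for j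
    proof -
      have "image_mset (\<lambda>w. ?col p (u[j := w])) (mset_set (Nb u j))
          = image_mset (\<lambda>w. ?col p (v[j := w])) (mset_set (Nb v j))"
        using r that
        by (intro pow_sum_inj[OF finNb(1) colKu[OF p uT Sb(1)] cardNb(1) finNb(1) colKu[OF p vT Sb(1)] cardNb(1)])
           (auto simp: A_def)
      moreover have "image_mset (\<lambda>w. ?col p (u[j := w])) (mset_set (V - Nb u j))
          = image_mset (\<lambda>w. ?col p (v[j := w])) (mset_set (V - Nb v j))"
        using r that
        by (intro pow_sum_inj[OF finNb(2) colKu[OF p uT Sb(2)] cardNb(2) finNb(2) colKu[OF p vT Sb(2)] cardNb(2)])
           (auto simp: B_def)
      ultimately show ?thesis
        by (simp only: split_mset[OF finV] Nb_def)
    qed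
    have lu: "length u = k" "length v = k" using uT vT by (auto simp: tuples_def)
    have "map (\<lambda>j. image_mset (\<lambda>w. (?col p (u[j := w]), adj E (u ! j) w)) (mset_set V)) [0..<k]
        = map (\<lambda>j. image_mset (\<lambda>w. (?col p (v[j := w]), adj E (v ! j) w)) (mset_set V)) [0..<k]"
      using m by (intro map_cong) auto
    then show ?thesis using c lu by (simp only: dkwl.simps(2) lu c)
  qed
  have ex: "\<forall>s\<in>{1..t}. \<exists>f. is_ffn f \<and> (\<forall>u\<in>?T. f (real (agg (s - 1) u)) = real (N ^ ?col s u))"
  proof
    fix s assume s: "s \<in> {1..t}"
    then have "Suc (s - 1) = s" "s - 1 < t" by auto
    then show "\<exists>f. is_ffn f \<and> (\<forall>u\<in>?T. f (real (agg (s - 1) u)) = real (N ^ ?col s u))"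
      using key[of "s - 1"] by (intro interp2[OF finT]) (metis of_nat_eq_iff)
  qed
  then obtain ffn where ffn: "\<forall>s\<in>{1..t}. is_ffn (ffn s) \<and>
      (\<forall>u\<in>?T. ffn s (real (agg (s - 1) u)) = real (N ^ ?col s u))"
    by (metis bchoice)
  define g where "g s u = real (N ^ ?col s u)" for s u
  define \<alpha> where "\<alpha> j = real (Q ^ (2*j+1))" for j
  define \<beta> where "\<beta> j = real (Q ^ (2*j+2))" for j
  have ginj: "g s u = g s v \<longleftrightarrow> ?col s u = ?col s v" for s u v
    using N1 by (simp add: g_def power_inject_exp)
  have rec: "g s u = ffn s (g (s - 1) u
          + (\<Sum>j<k. \<alpha> j * (\<Sum>w\<in>{w\<in>V. (u ! j, w) \<in> E}. g (s - 1) (u[j := w]))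
                   + \<beta> j * (\<Sum>w\<in>V - {w\<in>V. (u ! j, w) \<in> E}. g (s - 1) (u[j := w]))))"
    if "s \<in> {1..t}" "u \<in> ?T" for s u
  proof -
    have "g (s - 1) u
          + (\<Sum>j<k. \<alpha> j * (\<Sum>w\<in>{w\<in>V. (u ! j, w) \<in> E}. g (s - 1) (u[j := w]))
                   + \<beta> j * (\<Sum>w\<in>V - {w\<in>V. (u ! j, w) \<in> E}. g (s - 1) (u[j := w])))
        = real (agg (s - 1) u)"
      by (simp add: agg_def A_def B_def Nb_def g_def \<alpha>_def \<beta>_def)
    then show ?thesis using ffn that by (simp add: g_def)
  qed
  show ?thesis
    apply (rule exI[of _ g], rule exI[of _ \<alpha>], rule exI[of _ \<beta>], rule exI[of _ ffn])
    using ginj rec ffn by simp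
qed

end
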